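(* Let $p+q=4k+1$ with $k\ge1$. If $p-4\ge1$ and $q\ge1$, then $\mathbb{O}_{p,q}\simeq\mathbb{O}_{p-4,q+4}$. If $p\ge1$, $q-1\ge1$ and $p$ is even, then $\mathbb{O}_{p,q}\simeq\mathbb{O}_{p+1,q-1}$. (The isomorphisms preserve the $\mathbb{Z}_2^n$-graded structure.)
   Context: $\mathbb{Z}_2=\{0,1\}$. For $p+q=n\ge3$, $\mathbb{O}_{p,q}$ is the real algebra with basis $\{u_x: x\in\mathbb{Z}_2^n\}$ and product $u_x\cdot u_y=(-1)^{f(x,y)}u_{x+y}$, where $f(x,y)=\sum_{1\le i<j<k\le n}(x_ix_jy_k+x_iy_jx_k+y_ix_jx_k)+\sum_{1\le i\le j\le n}x_iy_j+\sum_{1\le i\le p}x_iy_i$. Homogeneous elements are scalar multiples of some $u_x$. *)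

theory Defs
  imports Complex_Main
begin

text \<open>Elements of Z_2^n are boolean lists of length n; index i (0-based) stands
  for coordinate i+1 of the paper.  Addition is coordinatewise xor.\<close>

definition Z2n :: "nat \<Rightarrow> bool list set" where
  "Z2n n = {x. length x = n}"

definition zadd :: "bool list \<Rightarrow> bool list \<Rightarrow> bool list" where
  "zadd x y = map2 (\<noteq>) x y"

definition bit :: "bool list \<Rightarrow> nat \<Rightarrow> nat" where
  "bit x i = (if x ! i then 1 else 0)"

definition ftw :: "nat \<Rightarrow> nat \<Rightarrow> bool list \<Rightarrow> bool list \<Rightarrow> nat" where
  "ftw p q x y =
     (\<Sum>(i,j,k) \<in> {(i,j,k). i < j \<and> j < k \<and> k < p + q}.
         bit x i * bit x j * bit y k + bit x i * bit y j * bit x k + bit y i * bit x j * bit x k)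
   + (\<Sum>(i,j) \<in> {(i,j). i \<le> j \<and> j < p + q}. bit x i * bit y j)
   + (\<Sum>i<p. bit x i * bit y i)"

text \<open>The algebra O_{p,q}: real coefficient functions on Z_2^n (vanishing outside),
  i.e. a = sum_x a(x) u_x, with the bilinear product extending
  u_x u_y = (-1)^{f(x,y)} u_{x+y}.\<close>

definition Ocarrier :: "nat \<Rightarrow> nat \<Rightarrow> (bool list \<Rightarrow> real) set" where
  "Ocarrier p q = {a. \<forall>x. x \<notin> Z2n (p + q) \<longrightarrow> a x = 0}"

definition Omult :: "nat \<Rightarrow> nat \<Rightarrow> (bool list \<Rightarrow> real) \<Rightarrow> (bool list \<Rightarrow> real) \<Rightarrow> (bool list \<Rightarrow> real)" where
  "Omult p q a b = (\<lambda>z. \<Sum>(x,y) \<in> {(x,y). x \<in> Z2n (p + q) \<and> y \<in> Z2n (p + q) \<and> zadd x y = z}.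
                        (-1) ^ ftw p q x y * a x * b y)"

definition Ubasis :: "bool list \<Rightarrow> (bool list \<Rightarrow> real)" where
  "Ubasis x = (\<lambda>y. if y = x then 1 else 0)"

definition Ocomp :: "nat \<Rightarrow> nat \<Rightarrow> bool list \<Rightarrow> (bool list \<Rightarrow> real) set" where
  "Ocomp p q x = {a \<in> Ocarrier p q. \<forall>y. y \<noteq> x \<longrightarrow> a y = 0}"

definition Ograded_iso :: "nat \<Rightarrow> nat \<Rightarrow> nat \<Rightarrow> nat \<Rightarrow> ((bool list \<Rightarrow> real) \<Rightarrow> (bool list \<Rightarrow> real)) \<Rightarrow> bool" where
  "Ograded_iso p q p' q' \<psi> \<longleftrightarrow>
     p + q = p' + q' \<and>
     bij_betw \<psi> (Ocarrier p q) (Ocarrier p' q') \<and>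
     (\<forall>a \<in> Ocarrier p q. \<forall>b \<in> Ocarrier p q. \<psi> (\<lambda>x. a x + b x) = (\<lambda>x. \<psi> a x + \<psi> b x)) \<and>
     (\<forall>a \<in> Ocarrier p q. \<forall>c::real. \<psi> (\<lambda>x. c * a x) = (\<lambda>x. c * \<psi> a x)) \<and>
     (\<forall>a \<in> Ocarrier p q. \<forall>b \<in> Ocarrier p q. \<psi> (Omult p q a b) = Omult p' q' (\<psi> a) (\<psi> b)) \<and>
     (\<exists>\<phi>. bij_betw \<phi> (Z2n (p + q)) (Z2n (p' + q')) \<and>
          (\<forall>x \<in> Z2n (p + q). \<psi> ` Ocomp p q x = Ocomp p' q' (\<phi> x)))"

definition Ograded_isomorphic :: "nat \<Rightarrow> nat \<Rightarrow> nat \<Rightarrow> nat \<Rightarrow> bool" where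
  "Ograded_isomorphic p q p' q' \<longleftrightarrow> (\<exists>\<psi>. Ograded_iso p q p' q' \<psi>)"

end

theory Submission imports Defs "HOL-Library.Z2" begin
declare add_bit_eq_xor[simp del] mult_bit_eq_and[simp del]
lemma bit_add_self[simp]: "(a::bit) + a = 0" by (cases a) auto
lemma bit_add_self2[simp]: "(a::bit) + (a + b) = b" by (simp add: add.assoc[symmetric])
lemmas xsimps = add.assoc add.commute add.left_commute bit_add_self bit_add_self2 add_0 add_0_right

lemma bit_eq_sum: "(a::bit) = b + c \<longleftrightarrow> b = a + c"
  by (metis add.assoc bit_add_self add_0 add.commute)

lemma bit_elim: "(s::bit) = 0 \<Longrightarrow> b = b + s" by simp

lemma bit_sum0: "(a::bit) + b = 0 \<Longrightarrow> a = b" by (cases a; cases b) auto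

lemma zadd_Cons[simp]: "zadd (a#x) (b#y) = (a \<noteq> b) # zadd x y"
  by (simp add: zadd_def)
lemma zadd_Nil[simp]: "zadd [] y = []" "zadd x [] = []"
  by (simp_all add: zadd_def)
lemma length_zadd[simp]: "length (zadd x y) = min (length x) (length y)"
  by (simp add: zadd_def)
lemma zadd_comm: "zadd x y = zadd y x"
proof (induction x arbitrary: y)
  case (Cons a x) then show ?case by (cases y) auto
qed simp
lemma Z2n_Suc: "Z2n (Suc n) = {b # x | b x. x \<in> Z2n n}"
  unfolding Z2n_def by (auto simp: length_Suc_conv)
lemma Z2n_0: "Z2n 0 = {[]}" unfolding Z2n_def by auto
lemma zadd_zero: "length x = n \<Longrightarrow> zadd (replicate n False) x = x"
  by (induction x arbitrary: n) (auto simp: zadd_def)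
lemma zadd_zero2: "length x = n \<Longrightarrow> zadd x (replicate n False) = x"
  using zadd_zero zadd_comm by metis
lemma zadd_in: "x \<in> Z2n n \<Longrightarrow> y \<in> Z2n n \<Longrightarrow> zadd x y \<in> Z2n n"
  by (simp add: Z2n_def)

lemma coboundary:
  fixes D :: "bool list \<Rightarrow> bool list \<Rightarrow> bit"
  shows "\<lbrakk>\<forall>x\<in>Z2n n. \<forall>y\<in>Z2n n. D x y = D y x; \<forall>x\<in>Z2n n. D x x = 0;
    \<forall>x\<in>Z2n n. \<forall>y\<in>Z2n n. \<forall>z\<in>Z2n n. D y z + D (zadd x y) z + D x (zadd y z) + D x y = 0\<rbrakk>
   \<Longrightarrow> \<exists>s. \<forall>x\<in>Z2n n. \<forall>y\<in>Z2n n. D x y = s x + s y + s (zadd x y)"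
proof (induction n arbitrary: D)
  case 0
  then show ?case by (intro exI[of _ "\<lambda>_. 0"]) (auto simp: Z2n_0)
next
  case (Suc n)
  define D0 where "D0 x y = D (False#x) (False#y)" for x y
  have "\<exists>s. \<forall>x\<in>Z2n n. \<forall>y\<in>Z2n n. D0 x y = s x + s y + s (zadd x y)"
  proof (rule Suc.IH)
    show "\<forall>x\<in>Z2n n. \<forall>y\<in>Z2n n. D0 x y = D0 y x" using Suc.prems(1) by (auto simp: D0_def Z2n_Suc)
    show "\<forall>x\<in>Z2n n. D0 x x = 0" using Suc.prems(2) by (auto simp: D0_def Z2n_Suc)
    show "\<forall>x\<in>Z2n n. \<forall>y\<in>Z2n n. \<forall>z\<in>Z2n n. D0 y z + D0 (zadd x y) z + D0 x (zadd y z) + D0 x y = 0"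
    proof (intro ballI)
      fix x y z assume "x \<in> Z2n n" "y \<in> Z2n n" "z \<in> Z2n n"
      then show "D0 y z + D0 (zadd x y) z + D0 x (zadd y z) + D0 x y = 0"
        using Suc.prems(3)[rule_format, of "False#x" "False#y" "False#z"]
        by (auto simp: D0_def Z2n_Suc)
    qed
  qed
  then obtain s0 where s0: "\<forall>x\<in>Z2n n. \<forall>y\<in>Z2n n. D0 x y = s0 x + s0 y + s0 (zadd x y)" by blast
  define e where "e = True # replicate n False"
  have eV: "e \<in> Z2n (Suc n)" by (simp add: e_def Z2n_def)
  have eadd: "zadd e (False # x) = True # x" if "x \<in> Z2n n" for x
    using that by (simp add: e_def zadd_zero Z2n_def)
  define s where "s l = (case l of [] \<Rightarrow> 0 | b # x \<Rightarrow> (if b then s0 x + D e (False#x) else s0 x))" for l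
  have sym: "D a b = D b a" if "a \<in> Z2n (Suc n)" "b \<in> Z2n (Suc n)" for a b
    using Suc.prems(1) that by blast
  have coc: "D b c + D (zadd a b) c + D a (zadd b c) + D a b = 0"
    if "a \<in> Z2n (Suc n)" "b \<in> Z2n (Suc n)" "c \<in> Z2n (Suc n)" for a b c
    using Suc.prems(3) that by blast
  have dg: "D a a = 0" if "a \<in> Z2n (Suc n)" for a using Suc.prems(2) that by blast
  have FV: "False # x \<in> Z2n (Suc n)" if "x \<in> Z2n n" for x using that by (simp add: Z2n_def)
  have TV: "True # x \<in> Z2n (Suc n)" if "x \<in> Z2n n" for x using that by (simp add: Z2n_def)
  have mixed: "D (True#x) (False#y) = s (True#x) + s (False#y) + s (zadd (True#x) (False#y))"
    if x: "x \<in> Z2n n" and y: "y \<in> Z2n n" for x y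
  proof -
    have c: "D (False#x) (False#y) + D (True#x) (False#y) + D e (False # zadd x y) + D e (False#x) = 0"
      using coc[OF eV FV[OF x] FV[OF y]] eadd[OF x] by simp
    have d: "D (False#x) (False#y) = s0 x + s0 y + s0 (zadd x y)" using s0 x y D0_def by auto
    have "D (True#x) (False#y) = D (False#x) (False#y) + D e (False # zadd x y) + D e (False#x)"
      using bit_elim[OF c, of "D (True#x) (False#y)"] by (simp add: xsimps)
    then show ?thesis using d by (simp add: s_def xsimps)
  qed
  have zero: "D (False # replicate n False) a = 0" if "a \<in> Z2n (Suc n)" for a
  proof -
    have z: "False # replicate n False \<in> Z2n (Suc n)" by (simp add: Z2n_def)
    have "zadd (False # replicate n False) (False # replicate n False) = False # replicate n False"
      using zadd_zero[of "replicate n False" n] by simp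
    moreover have "zadd (False # replicate n False) a = a" using that
      by (cases a) (auto simp: zadd_zero Z2n_def)
    ultimately show ?thesis using coc[OF z z that] dg[OF z] by (simp add: xsimps)
  qed
  show ?case
  proof (intro exI[of _ s] ballI)
    fix a b assume a: "a \<in> Z2n (Suc n)" and b: "b \<in> Z2n (Suc n)"
    then obtain c x d y where ax: "a = c # x" "x \<in> Z2n n" and "b = d # y" "y \<in> Z2n n"
      by (auto simp: Z2n_Suc)
    then show "D a b = s a + s b + s (zadd a b)"
    proof (cases c; cases d)
      assume "\<not> c" "\<not> d" then show ?thesis using ax \<open>b = d # y\<close> \<open>y \<in> Z2n n\<close> s0
        by (auto simp: s_def D0_def)
    next
      assume "c" "\<not> d" then show ?thesis using ax \<open>b = d # y\<close> \<open>y \<in> Z2n n\<close> mixed by auto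
    next
      assume "\<not> c" "d" then show ?thesis using ax \<open>b = d # y\<close> \<open>y \<in> Z2n n\<close> mixed[of y x]
        sym[OF a b] by (auto simp: xsimps zadd_comm)
    next
      assume "c" "d"
      have x: "x \<in> Z2n n" and y: "y \<in> Z2n n" by fact+
      have ex: "zadd e (True#x) = False # x" using x by (simp add: e_def zadd_zero Z2n_def)
      have ee: "zadd e e = False # replicate n False" using zadd_zero[of "replicate n False" n] by (simp add: e_def)
      have c1: "D e (False#y) + D (False#x) (False#y) + D (True#x) (True#y) + D (True#x) e = 0"
        using coc[OF TV[OF x] eV FV[OF y]] eadd[OF y] x by (simp add: e_def zadd_zero zadd_zero2 Z2n_def)
      have c2: "D (False#x) e + D (True#x) e + D e (True#x) + D e (False#x) = 0"
        using coc[OF eV FV[OF x] eV] eadd[OF x] x by (simp add: e_def zadd_zero zadd_zero2 Z2n_def)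
      have c3: "D e (False#x) + D (False#replicate n False) (False#x) + D e (True#x) + D e e = 0"
        using coc[OF eV eV FV[OF x]] eadd[OF x] ee by simp
      have z3: "D (False#replicate n False) (False#x) = 0" using zero FV[OF x] by blast
      have s1: "D (False#x) e = D e (False#x)" "D (True#x) e = D e (True#x)"
        using sym[OF FV[OF x] eV] sym[OF TV[OF x] eV] by auto
      have d: "D (False#x) (False#y) = s0 x + s0 y + s0 (zadd x y)" using s0 x y D0_def by auto
      have e1: "D (True#x) (True#y) = D e (False#y) + D (False#x) (False#y) + D (True#x) e"
        using bit_elim[OF c1, of "D (True#x) (True#y)"] by (simp add: xsimps)
      have e3: "D e (True#x) = D e (False#x)"
        using bit_elim[OF c3, of "D e (True#x)"] z3 dg[OF eV] by (simp add: xsimps)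
      have e2: "D (True#x) e = D e (False#x)"
        using bit_elim[OF c2, of "D (True#x) e"] s1 e3 by (simp add: xsimps)
      show ?thesis using \<open>c\<close> \<open>d\<close> ax \<open>b = d # y\<close> e1 e2 d
        by (simp add: s_def xsimps)
    qed
  qed
qed

definition Trip :: "nat \<Rightarrow> (nat \<times> nat \<times> nat) set" where
  "Trip n = {(i,j,k). i < j \<and> j < k \<and> k < n}"
definition Prs :: "nat \<Rightarrow> (nat \<times> nat) set" where
  "Prs n = {(i,j). i \<le> j \<and> j < n}"
lemma finite_Trip[simp]: "finite (Trip n)"
  by (rule finite_subset[of _ "{..<n} \<times> {..<n} \<times> {..<n}"]) (auto simp: Trip_def)
lemma finite_Prs[simp]: "finite (Prs n)"
  by (rule finite_subset[of _ "{..<n} \<times> {..<n}"]) (auto simp: Prs_def)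

definition vadd :: "(nat \<Rightarrow> bit) \<Rightarrow> (nat \<Rightarrow> bit) \<Rightarrow> nat \<Rightarrow> bit" where
  "vadd u v = (\<lambda>i. u i + v i)"
definition C :: "nat \<Rightarrow> (nat \<Rightarrow> bit) \<Rightarrow> (nat \<Rightarrow> bit) \<Rightarrow> bit" where
  "C n u v = (\<Sum>(i,j,k)\<in>Trip n. u i*u j*v k + u i*v j*u k + v i*u j*u k)"
definition Bt :: "nat \<Rightarrow> (nat \<Rightarrow> bit) \<Rightarrow> (nat \<Rightarrow> bit) \<Rightarrow> (nat \<Rightarrow> bit) \<Rightarrow> bit" where
  "Bt n u v w = (\<Sum>(i,j,k)\<in>Trip n. u i*v j*w k + v i*u j*w k + u i*w j*v k + v i*w j*u k
                   + w i*u j*v k + w i*v j*u k)"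
definition Ord :: "nat \<Rightarrow> (nat \<Rightarrow> bit) \<Rightarrow> (nat \<Rightarrow> bit) \<Rightarrow> bit" where
  "Ord n u v = (\<Sum>(i,j)\<in>Prs n. u i * v j)"
definition Dg :: "nat \<Rightarrow> nat set \<Rightarrow> (nat \<Rightarrow> bit) \<Rightarrow> (nat \<Rightarrow> bit) \<Rightarrow> bit" where
  "Dg n P u v = (\<Sum>i<n. of_bool (i \<in> P) * u i * v i)"
definition Tw :: "nat \<Rightarrow> nat set \<Rightarrow> (nat \<Rightarrow> bit) \<Rightarrow> (nat \<Rightarrow> bit) \<Rightarrow> bit" where
  "Tw n P u v = C n u v + Ord n u v + Dg n P u v"

lemma C_lin2: "C n u (vadd v w) = C n u v + C n u w"
  by (simp add: C_def vadd_def split_def distrib_left distrib_right sum.distrib add_ac)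
lemma C_quad1: "C n (vadd u v) w = C n u w + C n v w + Bt n u v w"
  by (simp add: C_def Bt_def vadd_def split_def distrib_left distrib_right sum.distrib add_ac)
lemma Bt_xyx: "Bt n u v u = 0"
  unfolding Bt_def by (rule sum.neutral) (auto simp: xsimps mult_ac)
lemma Bt_xyy: "Bt n u v v = 0"
  unfolding Bt_def by (rule sum.neutral) (auto simp: xsimps mult_ac)
lemma Ord_lin1: "Ord n (vadd u v) w = Ord n u w + Ord n v w"
  by (simp add: Ord_def vadd_def split_def distrib_left distrib_right sum.distrib)
lemma Ord_lin2: "Ord n u (vadd v w) = Ord n u v + Ord n u w"
  by (simp add: Ord_def vadd_def split_def distrib_left distrib_right sum.distrib)
lemma Dg_lin1: "Dg n P (vadd u v) w = Dg n P u w + Dg n P v w"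
  by (simp add: Dg_def vadd_def distrib_left distrib_right sum.distrib)
lemma Dg_lin2: "Dg n P u (vadd v w) = Dg n P u v + Dg n P u w"
  by (simp add: Dg_def vadd_def distrib_left distrib_right sum.distrib)
lemma Dg_sym: "Dg n P u v = Dg n P v u"
  by (simp add: Dg_def mult_ac)

lemma Tw_coc: "Tw n P v w + Tw n P (vadd u v) w + Tw n P u (vadd v w) + Tw n P u v = Bt n u v w"
  by (simp add: Tw_def C_lin2 C_quad1 Ord_lin1 Ord_lin2 Dg_lin1 Dg_lin2 xsimps)

definition S :: "nat \<Rightarrow> nat set \<Rightarrow> (nat \<Rightarrow> bit) \<Rightarrow> (nat \<Rightarrow> bit) \<Rightarrow> bit" where
  "S n P u v = Tw n P u v + Tw n P v u"

lemma S_alpha: "S n P u v = Tw n P (vadd u v) (vadd u v) + Tw n P u u + Tw n P v v"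
  by (simp add: S_def Tw_def C_lin2 C_quad1 Ord_lin1 Ord_lin2 Dg_lin1 Dg_lin2 Bt_xyx Bt_xyy xsimps)

lemma Bt_S: "Bt n u v w = S n P (vadd u v) w + S n P u w + S n P v w"
  by (simp add: S_def Tw_def C_lin2 C_quad1 Ord_lin1 Ord_lin2 Dg_lin1 Dg_lin2 xsimps)

definition vec :: "bool list \<Rightarrow> nat \<Rightarrow> bit" where
  "vec x = (\<lambda>i. of_bool (i < length x \<and> x ! i))"
lemma vec_zadd: "length x = length y \<Longrightarrow> vec (zadd x y) = vadd (vec x) (vec y)"
  by (auto simp: vec_def vadd_def zadd_def fun_eq_iff)

definition Al :: "nat \<Rightarrow> nat set \<Rightarrow> bool list \<Rightarrow> bit" where
  "Al n P x = Tw n P (vec x) (vec x)"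

lemma S_Al: "length x = length y \<Longrightarrow> S n P (vec x) (vec y) = Al n P (zadd x y) + Al n P x + Al n P y"
  by (simp add: S_alpha Al_def vec_zadd)

lemma GT:
  assumes phiV: "\<And>x. x \<in> Z2n n \<Longrightarrow> \<phi> x \<in> Z2n n"
    and add: "\<And>x y. x \<in> Z2n n \<Longrightarrow> y \<in> Z2n n \<Longrightarrow> \<phi> (zadd x y) = zadd (\<phi> x) (\<phi> y)"
    and al: "\<And>x. x \<in> Z2n n \<Longrightarrow> Al n P' (\<phi> x) = Al n P x"
  shows "\<exists>s. \<forall>x\<in>Z2n n. \<forall>y\<in>Z2n n. Tw n P' (vec (\<phi> x)) (vec (\<phi> y)) = Tw n P (vec x) (vec y) + s x + s y + s (zadd x y)"
proof -
  define D where "D x y = Tw n P (vec x) (vec y) + Tw n P' (vec (\<phi> x)) (vec (\<phi> y))" for x y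
  have len: "length x = n" if "x \<in> Z2n n" for x using that by (simp add: Z2n_def)
  have lenp: "length (\<phi> x) = n" if "x \<in> Z2n n" for x using phiV[OF that] by (simp add: Z2n_def)
  have Sphi: "S n P' (vec (\<phi> x)) (vec (\<phi> y)) = S n P (vec x) (vec y)" if "x \<in> Z2n n" "y \<in> Z2n n" for x y
    using that by (simp add: S_Al len lenp add[symmetric] al zadd_in)
  have "\<exists>s. \<forall>x\<in>Z2n n. \<forall>y\<in>Z2n n. D x y = s x + s y + s (zadd x y)"
  proof (rule coboundary)
    show "\<forall>x\<in>Z2n n. \<forall>y\<in>Z2n n. D x y = D y x"
    proof (intro ballI)
      fix x y assume xy: "x \<in> Z2n n" "y \<in> Z2n n"
      have "D x y + D y x = S n P (vec x) (vec y) + S n P' (vec (\<phi> x)) (vec (\<phi> y))"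
        by (simp add: D_def S_def xsimps)
      also have "\<dots> = 0" using Sphi[OF xy] by simp
      finally show "D x y = D y x" by (rule bit_sum0)
    qed
    show "\<forall>x\<in>Z2n n. D x x = 0" using al by (simp add: D_def Al_def)
    show "\<forall>x\<in>Z2n n. \<forall>y\<in>Z2n n. \<forall>z\<in>Z2n n. D y z + D (zadd x y) z + D x (zadd y z) + D x y = 0"
    proof (intro ballI)
      fix x y z assume xyz: "x \<in> Z2n n" "y \<in> Z2n n" "z \<in> Z2n n"
      have "D y z + D (zadd x y) z + D x (zadd y z) + D x y
         = (Tw n P (vec y) (vec z) + Tw n P (vadd (vec x) (vec y)) (vec z) + Tw n P (vec x) (vadd (vec y) (vec z)) + Tw n P (vec x) (vec y))
         + (Tw n P' (vec (\<phi> y)) (vec (\<phi> z)) + Tw n P' (vadd (vec (\<phi> x)) (vec (\<phi> y))) (vec (\<phi> z)) + Tw n P' (vec (\<phi> x)) (vadd (vec (\<phi> y)) (vec (\<phi> z))) + Tw n P' (vec (\<phi> x)) (vec (\<phi> y)))"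
        using xyz by (simp add: D_def add vec_zadd len lenp xsimps)
      also have "\<dots> = Bt n (vec x) (vec y) (vec z) + Bt n (vec (\<phi> x)) (vec (\<phi> y)) (vec (\<phi> z))"
        by (simp only: Tw_coc)
      also have "\<dots> = 0"
      proof -
        have "Bt n (vec (\<phi> x)) (vec (\<phi> y)) (vec (\<phi> z)) = S n P' (vadd (vec (\<phi> x)) (vec (\<phi> y))) (vec (\<phi> z)) + S n P' (vec (\<phi> x)) (vec (\<phi> z)) + S n P' (vec (\<phi> y)) (vec (\<phi> z))"
          by (rule Bt_S)
        also have "\<dots> = S n P (vadd (vec x) (vec y)) (vec z) + S n P (vec x) (vec z) + S n P (vec y) (vec z)"
          using xyz by (simp add: vec_zadd[symmetric] len lenp add[symmetric] Sphi zadd_in)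
        also have "\<dots> = Bt n (vec x) (vec y) (vec z)" by (rule Bt_S[symmetric])
        finally have "Bt n (vec (\<phi> x)) (vec (\<phi> y)) (vec (\<phi> z)) = Bt n (vec x) (vec y) (vec z)" .
        then show ?thesis by simp
      qed
      finally show "D y z + D (zadd x y) z + D x (zadd y z) + D x y = 0" .
    qed
  qed
  then obtain s where s: "\<forall>x\<in>Z2n n. \<forall>y\<in>Z2n n. D x y = s x + s y + s (zadd x y)" by blast
  show ?thesis
  proof (intro exI[of _ s] ballI)
    fix x y assume "x \<in> Z2n n" "y \<in> Z2n n"
    then have "D x y = s x + s y + s (zadd x y)" using s by blast
    then have h: "D x y + (s x + s y + s (zadd x y)) = 0" by simp
    show "Tw n P' (vec (\<phi> x)) (vec (\<phi> y)) = Tw n P (vec x) (vec y) + s x + s y + s (zadd x y)"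
      using bit_elim[OF h, of "Tw n P' (vec (\<phi> x)) (vec (\<phi> y))"]
      by (simp add: D_def xsimps)
  qed
qed


definition sg :: "bit \<Rightarrow> real" where "sg b = (if b = 0 then 1 else -1)"
lemma sg_add: "sg (a + b) = sg a * sg b" by (cases a; cases b) (auto simp: sg_def)
lemma sg_sq: "sg a * sg a = 1" by (auto simp: sg_def)
lemma of_nat_bit: "(of_nat m :: bit) = (if even m then 0 else 1)"
  by (induction m) auto
lemma pow_sg: "(-1::real) ^ m = sg (of_nat m)"
  by (simp add: sg_def of_nat_bit)

lemma of_nat_bitD: "i < length x \<Longrightarrow> (of_nat (Defs.bit x i) :: bit) = vec x i"
  by (simp add: Defs.bit_def vec_def)

lemma ftw_Tw:
  assumes "x \<in> Z2n (p+q)" "y \<in> Z2n (p+q)"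
  shows "(of_nat (ftw p q x y) :: bit) = Tw (p+q) {..<p} (vec x) (vec y)"
proof -
  let ?n = "p+q"
  have lx: "length x = ?n" and ly: "length y = ?n" using assms by (auto simp: Z2n_def)
  have c: "(of_nat (\<Sum>(i,j,k) \<in> {(i,j,k). i < j \<and> j < k \<and> k < p + q}.
         Defs.bit x i * Defs.bit x j * Defs.bit y k + Defs.bit x i * Defs.bit y j * Defs.bit x k + Defs.bit y i * Defs.bit x j * Defs.bit x k) :: bit)
      = C ?n (vec x) (vec y)"
    unfolding C_def Trip_def of_nat_sum
    by (rule sum.cong) (auto simp: of_nat_bitD lx ly)
  have o: "(of_nat (\<Sum>(i,j) \<in> {(i,j). i \<le> j \<and> j < p + q}. Defs.bit x i * Defs.bit y j) :: bit)
      = Ord ?n (vec x) (vec y)"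
    unfolding Ord_def Prs_def of_nat_sum
    by (rule sum.cong) (auto simp: of_nat_bitD lx ly)
  have d: "(of_nat (\<Sum>i<p. Defs.bit x i * Defs.bit y i) :: bit) = Dg ?n {..<p} (vec x) (vec y)"
  proof -
    have "Dg ?n {..<p} (vec x) (vec y) = (\<Sum>i\<in>{i\<in>{..<?n}. i < p}. vec x i * vec y i)"
      unfolding Dg_def by (subst sum.inter_filter) (auto intro: sum.cong)
    also have "{i\<in>{..<?n}. i < p} = {..<p}" by auto
    finally show ?thesis by (simp add: of_nat_sum of_nat_bitD lx ly)
  qed
  show ?thesis unfolding ftw_def Tw_def using c o d by simp
qed

lemma IL:
  assumes pq: "p + q = n" "p' + q' = n"
    and bij: "bij_betw \<phi> (Z2n n) (Z2n n)"
    and add: "\<And>x y. x \<in> Z2n n \<Longrightarrow> y \<in> Z2n n \<Longrightarrow> \<phi> (zadd x y) = zadd (\<phi> x) (\<phi> y)"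
    and s: "\<forall>x\<in>Z2n n. \<forall>y\<in>Z2n n. Tw n {..<p'} (vec (\<phi> x)) (vec (\<phi> y)) = Tw n {..<p} (vec x) (vec y) + s x + s y + s (zadd x y)"
  shows "Ograded_isomorphic p q p' q'"
proof -
  define V where "V = Z2n n"
  define \<sigma> where "\<sigma> x = sg (s x)" for x
  define \<phi>i where "\<phi>i = the_inv_into V \<phi>"
  have bV: "bij_betw \<phi> V V" using bij V_def by simp
  have inj: "inj_on \<phi> V" using bV bij_betw_def by blast
  have phiV: "\<phi> x \<in> V" if "x \<in> V" for x using bij_betw_apply[OF bV that] .
  have iV: "\<phi>i z \<in> V" if "z \<in> V" for z
    unfolding \<phi>i_def using bij_betw_apply[OF bij_betw_the_inv_into[OF bV] that] .
  have fi: "\<phi> (\<phi>i z) = z" if "z \<in> V" for z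
    using f_the_inv_into_f_bij_betw[OF bV that] \<phi>i_def by simp
  have if': "\<phi>i (\<phi> x) = x" if "x \<in> V" for x
    using the_inv_into_f_f[OF inj that] \<phi>i_def by simp
  have ss: "\<sigma> x * \<sigma> x = 1" for x by (simp add: \<sigma>_def sg_sq)
  have zV: "zadd x y \<in> V" if "x \<in> V" "y \<in> V" for x y using that zadd_in V_def by blast
  have key: "(-1::real) ^ ftw p' q' (\<phi> x) (\<phi> y) = (-1) ^ ftw p q x y * \<sigma> x * \<sigma> y * \<sigma> (zadd x y)"
    if "x \<in> V" "y \<in> V" for x y
  proof -
    have "(-1::real) ^ ftw p' q' (\<phi> x) (\<phi> y) = sg (Tw n {..<p'} (vec (\<phi> x)) (vec (\<phi> y)))"
      using ftw_Tw[of "\<phi> x" p' q' "\<phi> y"] phiV that pq by (simp add: pow_sg V_def)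
    also have "\<dots> = sg (Tw n {..<p} (vec x) (vec y)) * \<sigma> x * \<sigma> y * \<sigma> (zadd x y)"
      using s that by (simp add: V_def sg_add \<sigma>_def)
    also have "sg (Tw n {..<p} (vec x) (vec y)) = (-1::real) ^ ftw p q x y"
      using ftw_Tw[of x p q y] that pq by (simp add: pow_sg V_def)
    finally show ?thesis .
  qed
  define \<psi> where "\<psi> a = (\<lambda>z. if z \<in> V then \<sigma> (\<phi>i z) * a (\<phi>i z) else 0)" for a :: "bool list \<Rightarrow> real"
  define \<chi> where "\<chi> b = (\<lambda>x. if x \<in> V then \<sigma> x * b (\<phi> x) else 0)" for b :: "bool list \<Rightarrow> real"
  have car: "Ocarrier p q = {a. \<forall>x. x \<notin> V \<longrightarrow> a x = 0}" "Ocarrier p' q' = {a. \<forall>x. x \<notin> V \<longrightarrow> a x = 0}"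
    using pq by (auto simp: Ocarrier_def V_def)
  have psi_phi: "\<psi> a (\<phi> x) = \<sigma> x * a x" if "x \<in> V" for a x
    using that by (simp add: \<psi>_def phiV if')
  have bijpsi: "bij_betw \<psi> (Ocarrier p q) (Ocarrier p' q')"
  proof (rule bij_betw_byWitness[where f'=\<chi>])
    show "\<forall>a\<in>Ocarrier p q. \<chi> (\<psi> a) = a"
    proof
      fix a assume "a \<in> Ocarrier p q"
      then have a0: "x \<notin> V \<Longrightarrow> a x = 0" for x using car by auto
      show "\<chi> (\<psi> a) = a"
      proof
        fix x show "\<chi> (\<psi> a) x = a x"
          by (cases "x \<in> V") (auto simp: \<chi>_def psi_phi a0 mult.assoc[symmetric] ss)
      qed
    qed
    show "\<forall>b\<in>Ocarrier p' q'. \<psi> (\<chi> b) = b"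
    proof
      fix b assume "b \<in> Ocarrier p' q'"
      then have b0: "x \<notin> V \<Longrightarrow> b x = 0" for x using car by auto
      show "\<psi> (\<chi> b) = b"
      proof
        fix z show "\<psi> (\<chi> b) z = b z"
          by (cases "z \<in> V") (auto simp: \<chi>_def \<psi>_def iV fi b0 mult.assoc[symmetric] ss)
      qed
    qed
    show "\<psi> ` Ocarrier p q \<subseteq> Ocarrier p' q'" using car by (auto simp: \<psi>_def)
    show "\<chi> ` Ocarrier p' q' \<subseteq> Ocarrier p q" using car by (auto simp: \<chi>_def)
  qed
  have mult: "\<psi> (Omult p q a b) = Omult p' q' (\<psi> a) (\<psi> b)" if "a \<in> Ocarrier p q" "b \<in> Ocarrier p q" for a b
  proof
    fix z
    have Om: "Omult p q a b = (\<lambda>z. \<Sum>(x,y) \<in> {(x,y). x \<in> V \<and> y \<in> V \<and> zadd x y = z}. (-1) ^ ftw p q x y * a x * b y)"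
      "Omult p' q' (\<psi> a) (\<psi> b) = (\<lambda>z. \<Sum>(x,y) \<in> {(x,y). x \<in> V \<and> y \<in> V \<and> zadd x y = z}. (-1) ^ ftw p' q' x y * \<psi> a x * \<psi> b y)"
      using pq by (simp_all add: Omult_def V_def)
    show "\<psi> (Omult p q a b) z = Omult p' q' (\<psi> a) (\<psi> b) z"
    proof (cases "z \<in> V")
      case False
      then have e: "{(x,y). x \<in> V \<and> y \<in> V \<and> zadd x y = z} = {}" using zV by auto
      have "Omult p' q' (\<psi> a) (\<psi> b) z = 0" unfolding Om(2) e by simp
      then show ?thesis using False by (simp add: \<psi>_def)
    next
      case True
      define w where "w = \<phi>i z"
      have wV: "w \<in> V" using iV True w_def by simp
      define Sw where "Sw = {(x,y). x \<in> V \<and> y \<in> V \<and> zadd x y = w}"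
      define Sz where "Sz = {(x,y). x \<in> V \<and> y \<in> V \<and> zadd x y = z}"
      define h where "h = (\<lambda>(x,y). (\<phi> x, \<phi> y))"
      have hb: "bij_betw h Sw Sz"
      proof (rule bij_betw_imageI)
        show "inj_on h Sw" using inj unfolding inj_on_def h_def Sw_def by auto
        show "h ` Sw = Sz"
        proof
          show "h ` Sw \<subseteq> Sz"
          proof
            fix t assume "t \<in> h ` Sw"
            then obtain x y where "x \<in> V" "y \<in> V" "zadd x y = w" "t = (\<phi> x, \<phi> y)"
              unfolding Sw_def h_def by auto
            then show "t \<in> Sz" unfolding Sz_def using add[of x y] fi[OF True] phiV w_def V_def by auto
          qed
          show "Sz \<subseteq> h ` Sw"
          proof
            fix t assume "t \<in> Sz"
            then obtain x' y' where t: "t = (x',y')" "x' \<in> V" "y' \<in> V" "zadd x' y' = z" unfolding Sz_def by auto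
            have "\<phi> (zadd (\<phi>i x') (\<phi>i y')) = z" using add[of "\<phi>i x'" "\<phi>i y'"] t iV fi V_def by simp
            then have "zadd (\<phi>i x') (\<phi>i y') = w" using if' zV iV t w_def by metis
            then have "(\<phi>i x', \<phi>i y') \<in> Sw" using iV t Sw_def by auto
            moreover have "h (\<phi>i x', \<phi>i y') = t" using t fi h_def by simp
            ultimately show "t \<in> h ` Sw" by force
          qed
        qed
      qed
      have "Omult p' q' (\<psi> a) (\<psi> b) z = (\<Sum>t\<in>Sz. (case t of (x,y) \<Rightarrow> (-1) ^ ftw p' q' x y * \<psi> a x * \<psi> b y))"
        unfolding Om(2) Sz_def by (rule refl)
      also have "\<dots> = (\<Sum>t\<in>Sw. (case h t of (x,y) \<Rightarrow> (-1) ^ ftw p' q' x y * \<psi> a x * \<psi> b y))"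
        by (rule sum.reindex_bij_betw[OF hb, symmetric])
      also have "\<dots> = (\<Sum>t\<in>Sw. \<sigma> w * (case t of (x,y) \<Rightarrow> (-1) ^ ftw p q x y * a x * b y))"
      proof (rule sum.cong)
        fix t assume "t \<in> Sw"
        then obtain x y where t: "t = (x,y)" "x \<in> V" "y \<in> V" "zadd x y = w" unfolding Sw_def by auto
        have "(-1::real) ^ ftw p' q' (\<phi> x) (\<phi> y) * \<psi> a (\<phi> x) * \<psi> b (\<phi> y)
           = (-1) ^ ftw p q x y * \<sigma> x * \<sigma> y * \<sigma> w * (\<sigma> x * a x) * (\<sigma> y * b y)"
          using key[OF t(2,3)] t psi_phi by simp
        also have "\<dots> = \<sigma> w * ((-1) ^ ftw p q x y * a x * b y) * (\<sigma> x * \<sigma> x) * (\<sigma> y * \<sigma> y)"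
          by (simp add: mult_ac)
        finally show "(case h t of (x,y) \<Rightarrow> (-1) ^ ftw p' q' x y * \<psi> a x * \<psi> b y)
            = \<sigma> w * (case t of (x,y) \<Rightarrow> (-1) ^ ftw p q x y * a x * b y)"
          using t ss h_def by simp
      qed simp
      also have "\<dots> = \<sigma> w * Omult p q a b w"
        using Om Sw_def by (simp add: sum_distrib_left)
      also have "\<dots> = \<psi> (Omult p q a b) z" using True w_def by (simp add: \<psi>_def)
      finally show ?thesis by simp
    qed
  qed
  have grad: "\<psi> ` Ocomp p q x = Ocomp p' q' (\<phi> x)" if "x \<in> Z2n (p+q)" for x
  proof -
    have xV: "x \<in> V" using that pq V_def by simp
    show ?thesis
    proof
      show "\<psi> ` Ocomp p q x \<subseteq> Ocomp p' q' (\<phi> x)"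
      proof
        fix c assume "c \<in> \<psi> ` Ocomp p q x"
        then obtain a where a: "a \<in> Ocomp p q x" "c = \<psi> a" by auto
        then have ac: "a \<in> Ocarrier p q" and a0: "\<And>y. y \<noteq> x \<Longrightarrow> a y = 0" by (auto simp: Ocomp_def)
        have "c \<in> Ocarrier p' q'" unfolding a(2) using bij_betw_apply[OF bijpsi ac] .
        moreover have "c y = 0" if "y \<noteq> \<phi> x" for y
        proof (cases "y \<in> V")
          case True
          then have "\<phi>i y \<noteq> x" using that fi by auto
          then show ?thesis using a0 a(2) True by (simp add: \<psi>_def)
        qed (simp add: a(2) \<psi>_def)
        ultimately show "c \<in> Ocomp p' q' (\<phi> x)" by (simp add: Ocomp_def)
      qed
      show "Ocomp p' q' (\<phi> x) \<subseteq> \<psi> ` Ocomp p q x"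
      proof
        fix c assume c: "c \<in> Ocomp p' q' (\<phi> x)"
        then have cc: "c \<in> Ocarrier p' q'" and c0: "\<And>y. y \<noteq> \<phi> x \<Longrightarrow> c y = 0" by (auto simp: Ocomp_def)
        have "\<chi> c \<in> Ocarrier p q" using car cc by (auto simp: \<chi>_def)
        moreover have "\<chi> c y = 0" if "y \<noteq> x" for y
        proof (cases "y \<in> V")
          case True
          then have "\<phi> y \<noteq> \<phi> x" using that inj xV inj_on_def by metis
          then show ?thesis using c0 True by (simp add: \<chi>_def)
        qed (simp add: \<chi>_def)
        ultimately have "\<chi> c \<in> Ocomp p q x" by (simp add: Ocomp_def)
        moreover have "\<psi> (\<chi> c) = c"
        proof
          fix z show "\<psi> (\<chi> c) z = c z"
            using cc car by (cases "z \<in> V") (auto simp: \<chi>_def \<psi>_def iV fi mult.assoc[symmetric] ss)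
        qed
        ultimately show "c \<in> \<psi> ` Ocomp p q x" by force
      qed
    qed
  qed
  have "Ograded_iso p q p' q' \<psi>"
    unfolding Ograded_iso_def
  proof (intro conjI ballI allI)
    show "p + q = p' + q'" using pq by simp
    show "bij_betw \<psi> (Ocarrier p q) (Ocarrier p' q')" by (rule bijpsi)
    show "\<psi> (\<lambda>x. a x + b x) = (\<lambda>x. \<psi> a x + \<psi> b x)" for a b
      by (auto simp: \<psi>_def fun_eq_iff distrib_left)
    show "\<psi> (\<lambda>x. c * a x) = (\<lambda>x. c * \<psi> a x)" for a c
      by (auto simp: \<psi>_def fun_eq_iff mult_ac)
    show "\<psi> (Omult p q a b) = Omult p' q' (\<psi> a) (\<psi> b)" if "a \<in> Ocarrier p q" "b \<in> Ocarrier p q" for a b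
      using mult that by blast
    show "\<exists>\<phi>. bij_betw \<phi> (Z2n (p + q)) (Z2n (p' + q')) \<and> (\<forall>x\<in>Z2n (p + q). \<psi> ` Ocomp p q x = Ocomp p' q' (\<phi> x))"
      using bij grad pq by auto
  qed
  then show ?thesis unfolding Ograded_isomorphic_def by blast
qed


definition Lt :: "nat \<Rightarrow> (nat \<times> nat) set" where "Lt n = {(i,j). i < j \<and> j < n}"
lemma finite_Lt[simp]: "finite (Lt n)"
  by (rule finite_subset[of _ "{..<n} \<times> {..<n}"]) (auto simp: Lt_def)

definition E3 :: "nat \<Rightarrow> (nat \<Rightarrow> bit) \<Rightarrow> bit" where "E3 n u = (\<Sum>(i,j,k)\<in>Trip n. u i * u j * u k)"
definition E2 :: "nat \<Rightarrow> (nat \<Rightarrow> bit) \<Rightarrow> bit" where "E2 n u = (\<Sum>(i,j)\<in>Lt n. u i * u j)"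
definition E1 :: "nat \<Rightarrow> (nat \<Rightarrow> bit) \<Rightarrow> bit" where "E1 n u = (\<Sum>i<n. u i)"
definition W :: "nat \<Rightarrow> (nat \<Rightarrow> bit) \<Rightarrow> nat" where "W n u = card {i. i < n \<and> u i = 1}"

lemma Trip_Suc: "Trip (Suc n) = Trip n \<union> (\<lambda>(i,j). (i,j,n)) ` Lt n"
  by (auto simp: Trip_def Lt_def image_iff less_Suc_eq)
lemma Lt_Suc: "Lt (Suc n) = Lt n \<union> (\<lambda>i. (i,n)) ` {..<n}"
  by (auto simp: Lt_def image_iff less_Suc_eq)
lemma Prs_Suc: "Prs (Suc n) = Prs n \<union> (\<lambda>i. (i,n)) ` {..n}"
  by (auto simp: Prs_def image_iff less_Suc_eq)

lemma E3_Suc: "E3 (Suc n) u = E3 n u + u n * E2 n u"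
proof -
  have d: "Trip n \<inter> (\<lambda>(i,j). (i,j,n)) ` Lt n = {}" by (auto simp: Trip_def Lt_def)
  have inj: "inj_on (\<lambda>(i,j). (i,j,n)) (Lt n)" by (auto simp: inj_on_def)
  have "E3 (Suc n) u = E3 n u + (\<Sum>t\<in>(\<lambda>(i,j). (i,j,n)) ` Lt n. (case t of (i,j,k) \<Rightarrow> u i * u j * u k))"
    unfolding E3_def Trip_Suc by (rule sum.union_disjoint) (auto simp: d)
  also have "(\<Sum>t\<in>(\<lambda>(i,j). (i,j,n)) ` Lt n. (case t of (i,j,k) \<Rightarrow> u i * u j * u k))
      = (\<Sum>t\<in>Lt n. (case t of (i,j) \<Rightarrow> u i * u j * u n))"
    by (subst sum.reindex[OF inj]) (auto intro: sum.cong)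
  also have "\<dots> = u n * E2 n u" unfolding E2_def by (simp add: sum_distrib_left split_def mult_ac)
  finally show ?thesis .
qed
lemma E2_Suc: "E2 (Suc n) u = E2 n u + u n * E1 n u"
proof -
  have d: "Lt n \<inter> (\<lambda>i. (i,n)) ` {..<n} = {}" by (auto simp: Lt_def)
  have inj: "inj_on (\<lambda>i. (i,n)) {..<n}" by (auto simp: inj_on_def)
  show ?thesis unfolding E2_def E1_def Lt_Suc
    by (simp add: sum.union_disjoint d sum.reindex inj sum_distrib_left split_def mult_ac)
qed
lemma E1_Suc: "E1 (Suc n) u = E1 n u + u n" by (simp add: E1_def)
lemma Ord_Suc: "Ord (Suc n) u u = Ord n u u + u n * (E1 n u + u n)"
proof -
  have d: "Prs n \<inter> (\<lambda>i. (i,n)) ` {..n} = {}" by (auto simp: Prs_def)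
  have inj: "inj_on (\<lambda>i. (i,n)) {..n}" by (auto simp: inj_on_def)
  have e: "(\<Sum>i\<le>n. u i) = E1 n u + u n" by (simp add: E1_def lessThan_Suc_atMost[symmetric])
  show ?thesis unfolding Ord_def Prs_Suc
    by (simp add: sum.union_disjoint d sum.reindex inj sum_distrib_left split_def mult_ac e[symmetric])
qed
lemma W_Suc: "W (Suc n) u = W n u + (if u n = 1 then 1 else 0)"
proof -
  have "{i. i < Suc n \<and> u i = 1} = {i. i < n \<and> u i = 1} \<union> (if u n = 1 then {n} else {})"
    by (auto simp: less_Suc_eq)
  moreover have "finite {i. i < n \<and> u i = 1}" by simp
  ultimately show ?thesis unfolding W_def by (auto simp: card_insert_if)
qed

lemma of_nat_bit': "(of_nat m :: bit) = (if even m then 0 else 1)"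
  by (induction m) auto
lemma even_mod4: "even (m::nat) \<longleftrightarrow> (m mod 4 = 0 \<or> m mod 4 = 2)" by presburger

lemma closed:
  "E1 n u = of_nat (W n u) \<and> E2 n u = of_bool (W n u mod 4 = 2 \<or> W n u mod 4 = 3)
   \<and> E3 n u = of_bool (W n u mod 4 = 3) \<and> Ord n u u = of_bool (W n u mod 4 = 2 \<or> W n u mod 4 = 3) + of_nat (W n u)"
proof (induction n)
  case 0
  have "Trip 0 = {}" "Lt 0 = {}" "Prs 0 = {}" by (auto simp: Trip_def Lt_def Prs_def)
  then show ?case by (simp add: E1_def E2_def E3_def W_def Ord_def)
next
  case (Suc n)
  show ?case
  proof (cases "u n = 1")
    case False
    then have "u n = 0" by simp
    then show ?thesis using Suc by (simp add: E1_Suc E2_Suc E3_Suc Ord_Suc W_Suc)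
  next
    case True
    have m: "Suc (W n u) mod 4 = (if W n u mod 4 = 3 then 0 else Suc (W n u mod 4))"
      by (simp add: mod_Suc)
    have c: "W n u mod 4 = 0 \<or> W n u mod 4 = 1 \<or> W n u mod 4 = 2 \<or> W n u mod 4 = 3" by arith
    show ?thesis using Suc True c m by (auto simp: E1_Suc E2_Suc E3_Suc Ord_Suc W_Suc xsimps of_nat_bit' even_mod4)
  qed
qed

definition setx :: "bool list \<Rightarrow> nat set" where "setx x = {i. i < length x \<and> x ! i}"
definition Acl :: "nat set \<Rightarrow> nat set \<Rightarrow> bit" where
  "Acl P X = of_bool (card X mod 4 = 2) + of_nat (card (X - P))"

lemma C_diag: "C n u u = E3 n u"
  unfolding C_def E3_def by (rule sum.cong) (auto simp: add.assoc[symmetric])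

lemma Dg_diag: "Dg n P u u = of_nat (card {i. i < n \<and> u i = 1 \<and> i \<in> P})"
proof -
  have "Dg n P u u = (\<Sum>i<n. of_bool (u i = 1 \<and> i \<in> P))"
    unfolding Dg_def
  proof (rule sum.cong)
    fix i show "of_bool (i \<in> P) * u i * u i = of_bool (u i = 1 \<and> i \<in> P)" by (cases "u i") auto
  qed simp
  also have "\<dots> = of_nat (card {i. i < n \<and> u i = 1 \<and> i \<in> P})"
    by (simp add: Int_def)
  finally show ?thesis .
qed

lemma Al_cl: assumes "x \<in> Z2n n" shows "Al n P x = Acl P (setx x)"
proof -
  have lx: "length x = n" using assms by (simp add: Z2n_def)
  have vx: "vec x i = 1 \<longleftrightarrow> i < n \<and> x ! i" for i by (simp add: vec_def lx)
  have W: "W n (vec x) = card (setx x)" unfolding W_def setx_def using vx lx by metis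
  have P: "{i. i < n \<and> vec x i = 1 \<and> i \<in> P} = setx x \<inter> P" using vx lx by (auto simp: setx_def)
  have fin: "finite (setx x)" by (simp add: setx_def)
  have sp: "card (setx x) = card (setx x - P) + card (setx x \<inter> P)"
    using card_Diff_subset_Int fin by (metis Int_lower1 card_Diff_subset card_mono le_add_diff_inverse2 inf_commute Diff_Diff_Int Diff_subset finite_Diff)
  have ev: "(of_nat (card (setx x)) :: bit) + of_nat (card (setx x \<inter> P)) = of_nat (card (setx x - P))"
    unfolding sp by (simp add: of_nat_bit')
  define w where "w = card (setx x)"
  have c: "w mod 4 = 0 \<or> w mod 4 = 1 \<or> w mod 4 = 2 \<or> w mod 4 = 3" by arith
  have "Al n P x = E3 n (vec x) + Ord n (vec x) (vec x) + Dg n P (vec x) (vec x)"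
    by (simp add: Al_def Tw_def C_diag)
  also have "\<dots> = of_bool (w mod 4 = 3) + of_bool (w mod 4 = 2 \<or> w mod 4 = 3) + (of_nat (card (setx x)) + of_nat (card (setx x \<inter> P)))"
    using closed[of n "vec x"] by (simp add: Dg_diag P W w_def add.assoc)
  also have "\<dots> = of_bool (w mod 4 = 3) + of_bool (w mod 4 = 2 \<or> w mod 4 = 3) + of_nat (card (setx x - P))"
    by (simp only: ev)
  also have "\<dots> = Acl P (setx x)" unfolding Acl_def w_def[symmetric] using c by (auto simp: xsimps)
  finally show ?thesis .
qed


definition lst :: "nat \<Rightarrow> nat set \<Rightarrow> bool list" where "lst n A = map (\<lambda>i. i \<in> A) [0..<n]"
definition sd :: "nat set \<Rightarrow> nat set \<Rightarrow> nat set" where "sd A B = (A - B) \<union> (B - A)"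

lemma lst_in: "lst n A \<in> Z2n n" by (simp add: lst_def Z2n_def)
lemma setx_lst: "setx (lst n A) = A \<inter> {..<n}" by (auto simp: lst_def setx_def)
lemma lst_setx: "x \<in> Z2n n \<Longrightarrow> lst n (setx x) = x"
  by (auto simp: lst_def setx_def Z2n_def intro: nth_equalityI)
lemma setx_sub: "x \<in> Z2n n \<Longrightarrow> setx x \<subseteq> {..<n}" by (auto simp: setx_def Z2n_def)
lemma setx_zadd: "length x = length y \<Longrightarrow> setx (zadd x y) = sd (setx x) (setx y)"
  by (auto simp: setx_def zadd_def sd_def)

definition Rel :: "nat \<Rightarrow> nat set \<Rightarrow> nat set \<Rightarrow> bool" where
  "Rel n P P' \<longleftrightarrow> (\<exists>\<phi>. bij_betw \<phi> (Z2n n) (Z2n n) \<and>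
      (\<forall>x\<in>Z2n n. \<forall>y\<in>Z2n n. \<phi> (zadd x y) = zadd (\<phi> x) (\<phi> y)) \<and>
      (\<forall>x\<in>Z2n n. Acl P' (setx (\<phi> x)) = Acl P (setx x)))"

lemma Rel_sym: assumes "Rel n P P'" shows "Rel n P' P"
proof -
  obtain \<phi> where "bij_betw \<phi> (Z2n n) (Z2n n) \<and> (\<forall>x\<in>Z2n n. \<forall>y\<in>Z2n n. \<phi> (zadd x y) = zadd (\<phi> x) (\<phi> y))
    \<and> (\<forall>x\<in>Z2n n. Acl P' (setx (\<phi> x)) = Acl P (setx x))" using assms unfolding Rel_def by (elim exE) assumption
  then have b: "bij_betw \<phi> (Z2n n) (Z2n n)" and a: "\<forall>x\<in>Z2n n. \<forall>y\<in>Z2n n. \<phi> (zadd x y) = zadd (\<phi> x) (\<phi> y)"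
    and c: "\<forall>x\<in>Z2n n. Acl P' (setx (\<phi> x)) = Acl P (setx x)" by auto
  define \<phi>i where "\<phi>i = the_inv_into (Z2n n) \<phi>"
  have bi: "bij_betw \<phi>i (Z2n n) (Z2n n)" using bij_betw_the_inv_into[OF b] \<phi>i_def by simp
  have inj: "inj_on \<phi> (Z2n n)" using b bij_betw_def by blast
  have iV: "\<phi>i z \<in> Z2n n" if "z \<in> Z2n n" for z using bij_betw_apply[OF bi that] .
  have fi: "\<phi> (\<phi>i z) = z" if "z \<in> Z2n n" for z using f_the_inv_into_f_bij_betw[OF b that] \<phi>i_def by simp
  have if': "\<phi>i (\<phi> x) = x" if "x \<in> Z2n n" for x using the_inv_into_f_f[OF inj that] \<phi>i_def by simp
  show ?thesis unfolding Rel_def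
  proof (intro exI[of _ \<phi>i] conjI ballI)
    show "bij_betw \<phi>i (Z2n n) (Z2n n)" by (rule bi)
    fix x y assume x: "x \<in> Z2n n" and y: "y \<in> Z2n n"
    have e: "\<phi> (zadd (\<phi>i x) (\<phi>i y)) = zadd x y" using a iV fi x y by simp
    have w: "zadd (\<phi>i x) (\<phi>i y) \<in> Z2n n" using zadd_in iV x y by blast
    have "\<phi>i (\<phi> (zadd (\<phi>i x) (\<phi>i y))) = zadd (\<phi>i x) (\<phi>i y)" using if'[OF w] .
    then show "\<phi>i (zadd x y) = zadd (\<phi>i x) (\<phi>i y)" unfolding e .
  next
    fix x assume x: "x \<in> Z2n n"
    have "Acl P' (setx (\<phi> (\<phi>i x))) = Acl P (setx (\<phi>i x))" using c iV[OF x] by blast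
    then show "Acl P (setx (\<phi>i x)) = Acl P' (setx x)" unfolding fi[OF x] by simp
  qed
qed

lemma Rel_trans: assumes "Rel n P P'" "Rel n P' P''" shows "Rel n P P''"
proof -
  obtain \<phi> where "bij_betw \<phi> (Z2n n) (Z2n n) \<and> (\<forall>x\<in>Z2n n. \<forall>y\<in>Z2n n. \<phi> (zadd x y) = zadd (\<phi> x) (\<phi> y))
    \<and> (\<forall>x\<in>Z2n n. Acl P' (setx (\<phi> x)) = Acl P (setx x))" using assms(1) unfolding Rel_def by (elim exE) assumption
  then have b: "bij_betw \<phi> (Z2n n) (Z2n n)" and a: "\<forall>x\<in>Z2n n. \<forall>y\<in>Z2n n. \<phi> (zadd x y) = zadd (\<phi> x) (\<phi> y)"
    and c: "\<forall>x\<in>Z2n n. Acl P' (setx (\<phi> x)) = Acl P (setx x)" by auto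
  obtain \<phi>' where "bij_betw \<phi>' (Z2n n) (Z2n n) \<and> (\<forall>x\<in>Z2n n. \<forall>y\<in>Z2n n. \<phi>' (zadd x y) = zadd (\<phi>' x) (\<phi>' y))
    \<and> (\<forall>x\<in>Z2n n. Acl P'' (setx (\<phi>' x)) = Acl P' (setx x))" using assms(2) unfolding Rel_def by (elim exE) assumption
  then have b': "bij_betw \<phi>' (Z2n n) (Z2n n)" and a': "\<forall>x\<in>Z2n n. \<forall>y\<in>Z2n n. \<phi>' (zadd x y) = zadd (\<phi>' x) (\<phi>' y)"
    and c': "\<forall>x\<in>Z2n n. Acl P'' (setx (\<phi>' x)) = Acl P' (setx x)" by auto
  have V: "\<phi> x \<in> Z2n n" if "x \<in> Z2n n" for x using bij_betw_apply[OF b that] .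
  show ?thesis unfolding Rel_def
  proof (intro exI[of _ "\<phi>' \<circ> \<phi>"] conjI ballI)
    show "bij_betw (\<phi>' \<circ> \<phi>) (Z2n n) (Z2n n)" using b b' bij_betw_trans by blast
    fix x y assume x: "x \<in> Z2n n" and y: "y \<in> Z2n n"
    show "(\<phi>' \<circ> \<phi>) (zadd x y) = zadd ((\<phi>' \<circ> \<phi>) x) ((\<phi>' \<circ> \<phi>) y)" using a a' V x y by simp
  next
    fix x assume x: "x \<in> Z2n n"
    show "Acl P'' (setx ((\<phi>' \<circ> \<phi>) x)) = Acl P (setx x)" using c c' V x by simp
  qed
qed

lemma Rel_F:
  assumes Fsub: "\<And>Y. Y \<subseteq> {..<n} \<Longrightarrow> F Y \<subseteq> {..<n}"
    and Gsub: "\<And>Y. Y \<subseteq> {..<n} \<Longrightarrow> G Y \<subseteq> {..<n}"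
    and GF: "\<And>Y. Y \<subseteq> {..<n} \<Longrightarrow> G (F Y) = Y"
    and FG: "\<And>Y. Y \<subseteq> {..<n} \<Longrightarrow> F (G Y) = Y"
    and Fadd: "\<And>Y Z. Y \<subseteq> {..<n} \<Longrightarrow> Z \<subseteq> {..<n} \<Longrightarrow> F (sd Y Z) = sd (F Y) (F Z)"
    and Fal: "\<And>Y. Y \<subseteq> {..<n} \<Longrightarrow> Acl P' (F Y) = Acl P Y"
  shows "Rel n P P'"
  unfolding Rel_def
proof (intro exI[of _ "\<lambda>x. lst n (F (setx x))"] conjI ballI)
  have sx: "setx (lst n (F (setx x))) = F (setx x)" if "x \<in> Z2n n" for x
    using setx_lst Fsub[OF setx_sub[OF that]] by blast
  show "bij_betw (\<lambda>x. lst n (F (setx x))) (Z2n n) (Z2n n)"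
  proof (rule bij_betw_byWitness[where f'="\<lambda>x. lst n (G (setx x))"])
    show "\<forall>a\<in>Z2n n. lst n (G (setx (lst n (F (setx a))))) = a"
      using sx GF setx_sub lst_setx by simp
    show "\<forall>a\<in>Z2n n. lst n (F (setx (lst n (G (setx a))))) = a"
    proof
      fix a assume a: "a \<in> Z2n n"
      have "setx (lst n (G (setx a))) = G (setx a)" using setx_lst Gsub[OF setx_sub[OF a]] by blast
      then show "lst n (F (setx (lst n (G (setx a))))) = a" using FG setx_sub a lst_setx by simp
    qed
  qed (auto simp: lst_in)
  fix x y assume x: "x \<in> Z2n n" and y: "y \<in> Z2n n"
  have l: "length x = length y" using x y by (simp add: Z2n_def)
  have xy: "zadd x y \<in> Z2n n" using zadd_in x y by blast
  have ll: "length (lst n (F (setx x))) = length (lst n (F (setx y)))" by (simp add: lst_def)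
  have "setx (lst n (F (setx (zadd x y)))) = F (setx (zadd x y))" using sx[OF xy] .
  also have "\<dots> = F (sd (setx x) (setx y))" using setx_zadd[OF l] by simp
  also have "\<dots> = sd (F (setx x)) (F (setx y))" using Fadd setx_sub x y by blast
  also have "\<dots> = sd (setx (lst n (F (setx x)))) (setx (lst n (F (setx y))))" using sx x y by simp
  also have "\<dots> = setx (zadd (lst n (F (setx x))) (lst n (F (setx y))))" using setx_zadd[OF ll] by simp
  finally have e: "setx (lst n (F (setx (zadd x y)))) = setx (zadd (lst n (F (setx x))) (lst n (F (setx y))))" .
  have "lst n (setx (lst n (F (setx (zadd x y))))) = lst n (F (setx (zadd x y)))" using lst_setx lst_in by blast
  moreover have "lst n (setx (zadd (lst n (F (setx x))) (lst n (F (setx y))))) = zadd (lst n (F (setx x))) (lst n (F (setx y)))"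
    using lst_setx zadd_in lst_in by blast
  ultimately show "lst n (F (setx (zadd x y))) = zadd (lst n (F (setx x))) (lst n (F (setx y)))" using e by metis
next
  fix x assume x: "x \<in> Z2n n"
  show "Acl P' (setx (lst n (F (setx x)))) = Acl P (setx x)"
    using setx_lst Fsub[OF setx_sub[OF x]] Fal[OF setx_sub[OF x]] by (simp add: Int_absorb2)
qed


lemma card_split: "finite A \<Longrightarrow> card A = card (A - B) + card (A \<inter> B)"
  by (metis Diff_Diff_Int Diff_subset card_Diff_subset card_mono finite_Diff le_add_diff_inverse2 Int_commute Int_lower1 card_Diff_subset_Int Int_Diff)

lemma card_sd: assumes "finite A" "finite B" shows "card (sd A B) + 2 * card (A \<inter> B) = card A + card B"
proof -
  have "card (sd A B) = card (A - B) + card (B - A)"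
    unfolding sd_def using assms by (subst card_Un_disjoint) auto
  moreover have "card A = card (A - B) + card (A \<inter> B)" using card_split assms by blast
  moreover have "card B = card (B - A) + card (A \<inter> B)" using card_split[of B A] assms by (simp add: Int_commute)
  ultimately show ?thesis by simp
qed

lemma even_sd: "finite A \<Longrightarrow> finite B \<Longrightarrow> even (card (sd A B)) \<longleftrightarrow> (even (card A) \<longleftrightarrow> even (card B))"
  using card_sd[of A B] by (metis even_add even_mult_iff even_numeral)

lemma sd_Int: "sd Y Z \<inter> D = sd (Y \<inter> D) (Z \<inter> D)" by (auto simp: sd_def)

lemma Rel_perm:
  assumes P: "P \<subseteq> {..<n}" and P': "P' \<subseteq> {..<n}" and c: "card P = card P'"
  shows "Rel n P P'"
proof -
  have fP: "finite P" "finite P'" using P P' finite_subset by auto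
  obtain f1 where f1: "bij_betw f1 P' P" using finite_same_card_bij[OF fP(2) fP(1) c[symmetric]] by blast
  have c2: "card ({..<n} - P') = card ({..<n} - P)" using c P P' by (simp add: card_Diff_subset finite_subset)
  have fin2: "finite ({..<n} - P')" "finite ({..<n} - P)" by auto
  obtain f2 where f2: "bij_betw f2 ({..<n} - P') ({..<n} - P)" using finite_same_card_bij[OF fin2 c2] by blast
  define \<pi> where "\<pi> = (\<lambda>x. if x \<in> P' then f1 x else f2 x)"
  have b0: "bij_betw \<pi> (P' \<union> ({..<n} - P')) (P \<union> ({..<n} - P))"
    unfolding \<pi>_def by (rule bij_betw_disjoint_Un[OF f1 f2]) auto
  have u1: "P' \<union> ({..<n} - P') = {..<n}" using P' by auto
  have u2: "P \<union> ({..<n} - P) = {..<n}" using P by auto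
  have pb: "bij_betw \<pi> {..<n} {..<n}" using b0 unfolding u1 u2 .
  have "\<pi> ` P' = f1 ` P'" by (rule image_cong) (auto simp: \<pi>_def)
  then have pP: "\<pi> ` P' = P" using f1 unfolding bij_betw_def by simp
  have inj: "inj_on \<pi> {..<n}" using pb unfolding bij_betw_def by (rule conjunct1)
  have im: "\<pi> ` {..<n} = {..<n}" using pb unfolding bij_betw_def by (rule conjunct2)
  define F where "F Y = {i. i < n \<and> \<pi> i \<in> Y}" for Y
  have Fsub: "F Y \<subseteq> {..<n}" for Y by (auto simp: F_def)
  have piF: "\<pi> ` F Y = Y" if Y: "Y \<subseteq> {..<n}" for Y
  proof
    show "\<pi> ` F Y \<subseteq> Y" by (auto simp: F_def)
    show "Y \<subseteq> \<pi> ` F Y"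
    proof
      fix y assume y: "y \<in> Y"
      then have "y \<in> \<pi> ` {..<n}" using Y im by auto
      then obtain i where i: "i < n" "y = \<pi> i" by auto
      then have "i \<in> F Y" using y by (simp add: F_def)
      then show "y \<in> \<pi> ` F Y" using i by blast
    qed
  qed
  have Fpi: "F (\<pi> ` Y) = Y" if Y: "Y \<subseteq> {..<n}" for Y
  proof
    show "F (\<pi> ` Y) \<subseteq> Y"
    proof
      fix i assume "i \<in> F (\<pi> ` Y)"
      then have i: "i < n" "\<pi> i \<in> \<pi> ` Y" by (auto simp: F_def)
      then show "i \<in> Y" using inj_on_image_mem_iff[OF inj _ Y] by simp
    qed
    show "Y \<subseteq> F (\<pi> ` Y)" using Y by (auto simp: F_def)
  qed
  show ?thesis
  proof (rule Rel_F[where F=F and G="\<lambda>Y. \<pi> ` Y"])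
    show "F Y \<subseteq> {..<n}" for Y by (rule Fsub)
    show "\<pi> ` Y \<subseteq> {..<n}" if "Y \<subseteq> {..<n}" for Y using image_mono[OF that, of \<pi>] im by simp
    show "\<pi> ` F Y = Y" if "Y \<subseteq> {..<n}" for Y by (rule piF[OF that])
    show "F (\<pi> ` Y) = Y" if "Y \<subseteq> {..<n}" for Y by (rule Fpi[OF that])
    show "F (sd Y Z) = sd (F Y) (F Z)" for Y Z by (auto simp: F_def sd_def)
    show "Acl P' (F Y) = Acl P Y" if Y: "Y \<subseteq> {..<n}" for Y
    proof -
      have i1: "inj_on \<pi> (F Y)" by (rule inj_on_subset[OF inj Fsub])
      have s2: "F Y - P' \<subseteq> {..<n}" using Fsub by blast
      have i2: "inj_on \<pi> (F Y - P')" by (rule inj_on_subset[OF inj s2])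
      have "card (F Y) = card Y" using card_image[OF i1] piF[OF Y] by simp
      moreover have "\<pi> ` (F Y - P') = Y - P"
        using inj_on_image_set_diff[OF inj s2 P'] piF[OF Y] pP by simp
      then have "card (F Y - P') = card (Y - P)" using card_image[OF i2] by simp
      ultimately show ?thesis by (simp add: Acl_def)
    qed
  qed
qed

definition Tv :: "nat set \<Rightarrow> nat set \<Rightarrow> nat set \<Rightarrow> nat set" where
  "Tv D U Y = (if odd (card (Y \<inter> D)) then sd Y U else Y)"

lemma Rel_Tv:
  assumes U: "U \<subseteq> {..<n}" and D: "D \<subseteq> {..<n}" and ev: "even (card (U \<inter> D))"
    and al: "\<And>Y. Y \<subseteq> {..<n} \<Longrightarrow> Acl P' (Tv D U Y) = Acl P Y"
  shows "Rel n P P'"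
proof -
  have fD: "finite (Y \<inter> D)" for Y using D finite_subset by blast
  have par: "even (card (sd Y Z \<inter> D)) \<longleftrightarrow> (even (card (Y \<inter> D)) \<longleftrightarrow> even (card (Z \<inter> D)))" for Y Z
    unfolding sd_Int using even_sd fD by blast
  have TT: "Tv D U (Tv D U Y) = Y" for Y
    using par[of Y U] ev by (auto simp: Tv_def sd_def)
  show ?thesis
  proof (rule Rel_F[where F="Tv D U" and G="Tv D U"])
    show "Tv D U Y \<subseteq> {..<n}" if "Y \<subseteq> {..<n}" for Y using that U by (auto simp: Tv_def sd_def)
    then show "Tv D U Y \<subseteq> {..<n}" if "Y \<subseteq> {..<n}" for Y using that by blast
    show "Tv D U (Tv D U Y) = Y" for Y by (rule TT)
    show "Tv D U (Tv D U Y) = Y" for Y by (rule TT)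
    show "Tv D U (sd Y Z) = sd (Tv D U Y) (Tv D U Z)" for Y Z
      using par[of Y Z] by (auto simp: Tv_def sd_def)
    show "Acl P' (Tv D U Y) = Acl P Y" if "Y \<subseteq> {..<n}" for Y using al that by blast
  qed
qed

lemma Acl_eq: "(card X mod 4 = 2 \<longleftrightarrow> card X' mod 4 = 2) \<Longrightarrow> (even (card (X - P)) \<longleftrightarrow> even (card (X' - P'))) \<Longrightarrow> Acl P X = Acl P' X'"
  by (simp add: Acl_def of_nat_bit')

lemma ar1: "(a::nat) = b + c \<Longrightarrow> even a \<Longrightarrow> (even b \<longleftrightarrow> even c)" by presburger
lemma ar2: "(s::nat) + 2 * t = y + 2 \<Longrightarrow> odd y \<Longrightarrow> (s mod 4 = 2 \<longleftrightarrow> y mod 4 = 2)" by presburger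
lemma ar3: "(s::nat) + 2 * t = y + 6 \<Longrightarrow> odd t \<Longrightarrow> (s mod 4 = 2 \<longleftrightarrow> y mod 4 = 2)" by presburger
lemma ar4: "(a::nat) = b + c \<Longrightarrow> odd a \<Longrightarrow> (even d \<longleftrightarrow> odd b) \<Longrightarrow> (even d \<longleftrightarrow> even c)" by presburger

lemma Rel_swap:
  assumes P: "P \<subseteq> {..<n}" and a: "a \<in> P" and b: "b \<notin> P" "b < n"
  shows "Rel n ({..<n} - P) P"
proof (rule Rel_Tv[where D="{..<n}" and U="{a,b}"])
  show "{a,b} \<subseteq> {..<n}" using a b P by auto
  show "{..<n} \<subseteq> {..<n}" by simp
  have "{a,b} \<inter> {..<n} = {a,b}" using a b P by auto
  moreover have "a \<noteq> b" using a b by auto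
  ultimately show "even (card ({a,b} \<inter> {..<n}))" by simp
  fix Y assume Y: "Y \<subseteq> {..<n}"
  have fY: "finite Y" using Y finite_subset by blast
  have YD: "Y \<inter> {..<n} = Y" using Y by auto
  have cs: "card Y = card (Y - P) + card (Y \<inter> P)" using card_split fY by blast
  have YP: "Y - ({..<n} - P) = Y \<inter> P" using Y by auto
  show "Acl P (Tv {..<n} {a,b} Y) = Acl ({..<n} - P) Y"
  proof (cases "odd (card Y)")
    case False
    then have t: "Tv {..<n} {a,b} Y = Y" by (simp add: Tv_def YD)
    show ?thesis unfolding t YP
      by (rule Acl_eq) (simp, simp only: YP, rule ar1[OF cs], use False in simp)
  next
    case True
    have t: "Tv {..<n} {a,b} Y = sd Y {a,b}" using True YD by (simp add: Tv_def)
    have "a \<noteq> b" using a b by blast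
    then have ab: "card {a,b} = 2" by simp
    have c1: "card (sd Y {a,b}) + 2 * card (Y \<inter> {a,b}) = card Y + 2"
      using card_sd[OF fY, of "{a,b}"] ab by simp
    have s2: "sd Y {a,b} - P = sd (Y - P) {b}" using a b by (auto simp: sd_def)
    have c2: "even (card (sd (Y - P) {b})) \<longleftrightarrow> (even (card (Y - P)) \<longleftrightarrow> even (card {b}))"
      using even_sd[of "Y - P" "{b}"] fY by simp
    have c2': "even (card (sd (Y - P) {b})) \<longleftrightarrow> odd (card (Y - P))" using c2 by simp
    show ?thesis unfolding t YP
    proof (rule Acl_eq)
      show "(card (sd Y {a,b}) mod 4 = 2) \<longleftrightarrow> (card Y mod 4 = 2)" by (rule ar2[OF c1 True])
      show "even (card (sd Y {a,b} - P)) \<longleftrightarrow> even (card (Y - ({..<n} - P)))" unfolding s2 YP by (rule ar4[OF cs True c2'])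
    qed
  qed
qed

lemma Rel_G:
  assumes P: "P \<subseteq> {..<n}" and G: "G \<subseteq> {..<n}" "card G = 6" "card (G - P) = 1"
  shows "Rel n (sd P G) P"
proof (rule Rel_Tv[where D=G and U=G])
  show "G \<subseteq> {..<n}" "G \<subseteq> {..<n}" using G by auto
  show "even (card (G \<inter> G))" using G by simp
  fix Y assume Y: "Y \<subseteq> {..<n}"
  have fY: "finite Y" using Y finite_subset by blast
  have fG: "finite G" using G finite_subset by blast
  have s1: "Y - sd P G = sd (Y - P) (Y \<inter> G)" by (auto simp: sd_def)
  have p1: "even (card (Y - sd P G)) \<longleftrightarrow> (even (card (Y - P)) \<longleftrightarrow> even (card (Y \<inter> G)))"
    unfolding s1 using even_sd[of "Y - P" "Y \<inter> G"] fY by simp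
  show "Acl P (Tv G G Y) = Acl (sd P G) Y"
  proof (cases "odd (card (Y \<inter> G))")
    case False
    then have t: "Tv G G Y = Y" by (simp add: Tv_def)
    show ?thesis unfolding t by (rule Acl_eq) (simp, use p1 False in simp)
  next
    case True
    have t: "Tv G G Y = sd Y G" using True by (simp add: Tv_def)
    have c1: "card (sd Y G) + 2 * card (Y \<inter> G) = card Y + 6"
      using card_sd[OF fY fG] G by simp
    have s2: "sd Y G - P = sd (Y - P) (G - P)" by (auto simp: sd_def)
    have c2: "even (card (sd (Y - P) (G - P))) \<longleftrightarrow> (even (card (Y - P)) \<longleftrightarrow> even (card (G - P)))"
      using even_sd[of "Y - P" "G - P"] fY fG by simp
    show ?thesis unfolding t
    proof (rule Acl_eq)
      show "(card (sd Y G) mod 4 = 2) \<longleftrightarrow> (card Y mod 4 = 2)" by (rule ar3[OF c1 True])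
      show "even (card (sd Y G - P)) \<longleftrightarrow> even (card (Y - sd P G))" unfolding s2 using c2 p1 True G by simp
    qed
  qed
qed

lemma Rel_iso:
  assumes pq: "p + q = n" "p' + q' = n" and R: "Rel n {..<p} {..<p'}"
  shows "Ograded_isomorphic p q p' q'"
proof -
  obtain \<phi> where "bij_betw \<phi> (Z2n n) (Z2n n) \<and> (\<forall>x\<in>Z2n n. \<forall>y\<in>Z2n n. \<phi> (zadd x y) = zadd (\<phi> x) (\<phi> y))
    \<and> (\<forall>x\<in>Z2n n. Acl {..<p'} (setx (\<phi> x)) = Acl {..<p} (setx x))" using R unfolding Rel_def by (elim exE) assumption
  then have b: "bij_betw \<phi> (Z2n n) (Z2n n)" and a: "\<forall>x\<in>Z2n n. \<forall>y\<in>Z2n n. \<phi> (zadd x y) = zadd (\<phi> x) (\<phi> y)"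
    and c: "\<forall>x\<in>Z2n n. Acl {..<p'} (setx (\<phi> x)) = Acl {..<p} (setx x)" by auto
  have V: "\<phi> x \<in> Z2n n" if "x \<in> Z2n n" for x using bij_betw_apply[OF b that] .
  have "\<exists>s. \<forall>x\<in>Z2n n. \<forall>y\<in>Z2n n. Tw n {..<p'} (vec (\<phi> x)) (vec (\<phi> y)) = Tw n {..<p} (vec x) (vec y) + s x + s y + s (zadd x y)"
  proof (rule GT)
    show "\<phi> x \<in> Z2n n" if "x \<in> Z2n n" for x using V that by blast
    show "\<phi> (zadd x y) = zadd (\<phi> x) (\<phi> y)" if "x \<in> Z2n n" "y \<in> Z2n n" for x y using a that by blast
    show "Al n {..<p'} (\<phi> x) = Al n {..<p} x" if "x \<in> Z2n n" for x
      using Al_cl[OF V[OF that]] Al_cl[OF that] c that by simp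
  qed
  then obtain s where "\<forall>x\<in>Z2n n. \<forall>y\<in>Z2n n. Tw n {..<p'} (vec (\<phi> x)) (vec (\<phi> y)) = Tw n {..<p} (vec x) (vec y) + s x + s y + s (zadd x y)"
    by blast
  then show ?thesis using IL[OF pq b] a by blast
qed

lemma Rel_refl: "Rel n {..<t} {..<t}" if "t \<le> n" using Rel_perm[of "{..<t}" n "{..<t}"] that by auto

lemma M3: assumes "5 \<le> a" "a < n" shows "Rel n {..<a-4} {..<a}"
proof -
  define G where "G = {a-5..a}"
  have G1: "G \<subseteq> {..<n}" "card G = 6" using assms by (auto simp: G_def)
  have GP: "G - {..<a} = {a}" using assms by (auto simp: G_def)
  then have G2: "card (G - {..<a}) = 1" by simp
  have R: "Rel n (sd {..<a} G) {..<a}" using Rel_G[of "{..<a}" n G] G1 G2 assms by auto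
  have "card G = card (G - {..<a}) + card (G \<inter> {..<a})" using card_split[of G] G1 by (simp add: G_def)
  then have ci: "card ({..<a} \<inter> G) = 5" using G1 G2 by (simp add: Int_commute)
  have "card (sd {..<a} G) + 2 * card ({..<a} \<inter> G) = card {..<a} + card G"
    by (rule card_sd) (auto simp: G_def)
  then have csd: "card (sd {..<a} G) = a - 4" using ci G1 by simp
  have sdsub: "sd {..<a} G \<subseteq> {..<n}" using G1 assms by (auto simp: sd_def)
  have "Rel n {..<a-4} (sd {..<a} G)"
  proof (rule Rel_perm)
    show "{..<a-4} \<subseteq> {..<n}" using assms by auto
    show "sd {..<a} G \<subseteq> {..<n}" by (rule sdsub)
    show "card {..<a-4} = card (sd {..<a} G)" using csd by simp
  qed
  then show ?thesis using R Rel_trans by blast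
qed

lemma M2: assumes "1 \<le> a" "a < n" shows "Rel n {..<n-a} {..<a}"
proof -
  have R: "Rel n ({..<n} - {..<a}) {..<a}" using Rel_swap[of "{..<a}" n 0 a] assms by auto
  have c: "card ({..<n} - {..<a}) = n - a" using assms by (simp add: card_Diff_subset)
  have "Rel n {..<n-a} ({..<n} - {..<a})"
  proof (rule Rel_perm)
    show "{..<n-a} \<subseteq> {..<n}" by auto
    show "{..<n} - {..<a} \<subseteq> {..<n}" by blast
    show "card {..<n-a} = card ({..<n} - {..<a})" using c by simp
  qed
  then show ?thesis using R Rel_trans by blast
qed

lemma chain: "1 \<le> t \<Longrightarrow> t + 4 * m < n \<Longrightarrow> Rel n {..<t} {..<t + 4 * m}"
proof (induction m)
  case 0 then show ?case using Rel_refl by simp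
next
  case (Suc m)
  have "Rel n {..<t + 4 * m} {..<t + 4 * Suc m}" using M3[of "t + 4 * Suc m" n] Suc.prems by simp
  then show ?case using Suc Rel_trans by simp
qed

theorem mainTheorem7:
  fixes p q k :: nat
  assumes "p + q = 4 * k + 1" and "k \<ge> 1"
  shows "(p - 4 \<ge> 1 \<and> q \<ge> 1 \<longrightarrow> Ograded_isomorphic p q (p - 4) (q + 4))
       \<and> (p \<ge> 1 \<and> q - 1 \<ge> 1 \<and> even p \<longrightarrow> Ograded_isomorphic p q (p + 1) (q - 1))"
proof (intro conjI impI)
  define n where "n = p + q"
  assume h: "p - 4 \<ge> 1 \<and> q \<ge> 1"
  then have "5 \<le> p" "p < n" using n_def by auto
  then have "Rel n {..<p-4} {..<p}" by (rule M3)
  then have R: "Rel n {..<p} {..<p-4}" by (rule Rel_sym)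
  have e1: "p + q = n" "p - 4 + (q + 4) = n" using h n_def by auto
  show "Ograded_isomorphic p q (p - 4) (q + 4)" by (rule Rel_iso[OF e1 R])
next
  define n where "n = p + q"
  assume h: "p \<ge> 1 \<and> q - 1 \<ge> 1 \<and> even p"
  have pn: "1 \<le> p" "p < n" using h n_def by auto
  have "n - p = q" using n_def by simp
  then have R1: "Rel n {..<p} {..<q}" using Rel_sym[OF M2[OF pn]] by simp
  have R2: "Rel n {..<q} {..<p+1}"
  proof (cases "q \<le> p + 1")
    case True
    have "\<exists>m. p + 1 = q + 4 * m" using True h assms by presburger
    then obtain m where m: "p + 1 = q + 4 * m" by blast
    have c: "1 \<le> q" "q + 4 * m < n" using m h n_def by auto
    have "Rel n {..<q} {..<q + 4 * m}" using chain[OF c] .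
    then show ?thesis using m by simp
  next
    case False
    have "\<exists>m. q = p + 1 + 4 * m" using False h assms by presburger
    then obtain m where m: "q = p + 1 + 4 * m" by blast
    have c: "1 \<le> p + 1" "p + 1 + 4 * m < n" using m h n_def by auto
    have "Rel n {..<p+1} {..<p + 1 + 4 * m}" using chain[OF c] .
    then have "Rel n {..<p+1} {..<q}" using m by simp
    then show ?thesis by (rule Rel_sym)
  qed
  have R: "Rel n {..<p} {..<p+1}" using Rel_trans[OF R1 R2] .
  have e1: "p + q = n" "p + 1 + (q - 1) = n" using h n_def by auto
  show "Ograded_isomorphic p q (p + 1) (q - 1)" by (rule Rel_iso[OF e1 R])
qed

end
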